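(* Let $(\mathcal{X},\|\cdot\|)$ be a separable Banach space, let $\mu,\nu$ be Borel probability measures on $\mathcal{X}$ with $\nu$ having finite first moment and not a Dirac measure, and let $\pi\in\Pi(\mu,\nu)$. Define $$T^{\|\cdot\|}(\pi)=1-\frac{\int\int\int\|y-z\|\,\pi_{x_1}(dy)\,\pi_{x_1}(dz)\,\mu(dx_1)}{\int\int\|y-z\|\,\nu(dy)\,\nu(dz)}.$$ Then $T^{\|\cdot\|}(\pi)\le 2\,\overrightarrow{\mathcal{W}}(\pi)$, where $\overrightarrow{\mathcal{W}}$ is computed with the metric $d(x,y)=\|x-y\|$.
   Context: $\Pi(\mu,\nu)$ is the set of couplings of $\mu,\nu$; $\pi_{x_1}$ is the disintegration of $\pi$ w.r.t. the first coordinate. $\mathcal{W}(\alpha,\beta)=\inf_{\gamma\in\Pi(\alpha,\beta)}\int d(x,y)\,\gamma(dx,dy)$. The Wasserstein correlation coefficient is $\overrightarrow{\mathcal{W}}(\pi)=\int\mathcal{W}(\pi_{x_1},\nu)\,\mu(dx_1)\big/\int\int d(y,z)\,\nu(dy)\nu(dz)$. *)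

theory Defs
  imports "HOL-Probability.Probability"
begin

definition borel_prob :: "'a::topological_space measure \<Rightarrow> bool" where
  "borel_prob M \<longleftrightarrow> prob_space M \<and> sets M = sets borel"

definition couplings :: "'a::topological_space measure \<Rightarrow> 'a measure \<Rightarrow> ('a \<times> 'a) measure set" where
  "couplings \<alpha> \<beta> = {\<gamma>. borel_prob \<gamma> \<and> distr \<gamma> borel fst = \<alpha> \<and> distr \<gamma> borel snd = \<beta>}"

definition disintegration ::
  "('a::topological_space \<times> 'a) measure \<Rightarrow> 'a measure \<Rightarrow> ('a \<Rightarrow> 'a measure) \<Rightarrow> bool" where
  "disintegration \<pi> \<mu> K \<longleftrightarrow>
     K \<in> measurable borel (prob_algebra borel) \<and>
     (\<forall>A\<in>sets borel. \<forall>B\<in>sets borel.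
        emeasure \<pi> (A \<times> B) = (\<integral>\<^sup>+ x. indicator A x * emeasure (K x) B \<partial>\<mu>))"

definition wasserstein :: "('a \<Rightarrow> 'a \<Rightarrow> real) \<Rightarrow> 'a::topological_space measure \<Rightarrow> 'a measure \<Rightarrow> ennreal" where
  "wasserstein d \<alpha> \<beta> = (INF \<gamma>\<in>couplings \<alpha> \<beta>. \<integral>\<^sup>+ p. ennreal (d (fst p) (snd p)) \<partial>\<gamma>)"

text \<open>Wasserstein correlation coefficient of pi (given through its first marginal mu,
  second marginal nu and disintegration K).  All quantities involved are finite under
  the hypotheses of the theorem (finite first moment of nu).\<close>
definition wcorr :: "('a \<Rightarrow> 'a \<Rightarrow> real) \<Rightarrow> 'a::topological_space measure \<Rightarrow> 'a measure \<Rightarrow> ('a \<Rightarrow> 'a measure) \<Rightarrow> real" where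
  "wcorr d \<mu> \<nu> K =
     enn2real (\<integral>\<^sup>+ x. wasserstein d (K x) \<nu> \<partial>\<mu>) /
     enn2real (\<integral>\<^sup>+ y. \<integral>\<^sup>+ z. ennreal (d y z) \<partial>\<nu> \<partial>\<nu>)"

definition T_norm :: "'a::real_normed_vector measure \<Rightarrow> 'a measure \<Rightarrow> ('a \<Rightarrow> 'a measure) \<Rightarrow> real" where
  "T_norm \<mu> \<nu> K = 1 -
     enn2real (\<integral>\<^sup>+ x. \<integral>\<^sup>+ y. \<integral>\<^sup>+ z. ennreal (norm (y - z)) \<partial>K x \<partial>K x \<partial>\<mu>) /
     enn2real (\<integral>\<^sup>+ y. \<integral>\<^sup>+ z. ennreal (norm (y - z)) \<partial>\<nu> \<partial>\<nu>)"

end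

theory Submission imports Defs begin

lemma meas_G:
  fixes M :: "'a::{banach,second_countable_topology} measure"
  assumes "sets M = sets borel" "prob_space M"
  shows "(\<lambda>y. \<integral>\<^sup>+z. ennreal (norm (y - z)) \<partial>M) \<in> borel_measurable borel"
proof -
  interpret prob_space M by fact
  have "(\<lambda>(y,z). ennreal (norm (y - z))) \<in> borel_measurable (borel \<Otimes>\<^sub>M M)"
    using assms(1) by (simp add: measurable_cong_sets[OF sets_pair_measure_cong[OF refl assms(1)] refl])
  then show ?thesis by (rule borel_measurable_nn_integral)
qed

lemma sets_pair_borel: "sets (borel \<Otimes>\<^sub>M borel) = sets (borel :: ('a::second_countable_topology \<times> 'a) measure)"
  by (simp only: borel_prod)

lemma tri3: "norm ((a::'a::real_normed_vector) - c) \<le> norm (a - b) + norm (b - c)"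
  by (metis diff_add_cancel add_diff_eq norm_triangle_ineq)

lemma coupling_ineq:
  fixes \<alpha> \<nu> :: "'a::{banach,second_countable_topology} measure" and \<gamma> :: "('a \<times> 'a) measure"
  assumes sa: "sets \<alpha> = sets borel" and pa: "prob_space \<alpha>"
    and sn: "sets \<nu> = sets borel" and pn: "prob_space \<nu>"
    and g: "\<gamma> \<in> couplings \<alpha> \<nu>"
  shows "(\<integral>\<^sup>+y. \<integral>\<^sup>+z. ennreal (norm (y - z)) \<partial>\<nu> \<partial>\<nu>) \<le>
     2 * (\<integral>\<^sup>+ p. ennreal (norm (fst p - snd p)) \<partial>\<gamma>) + (\<integral>\<^sup>+y. \<integral>\<^sup>+z. ennreal (norm (y - z)) \<partial>\<alpha> \<partial>\<alpha>)"
proof -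
  from g have pg: "prob_space \<gamma>" and sg0: "sets \<gamma> = sets borel"
    and df: "distr \<gamma> borel fst = \<alpha>" and ds: "distr \<gamma> borel snd = \<nu>"
    unfolding couplings_def borel_prob_def by auto
  interpret G: prob_space \<gamma> by fact
  have sg: "sets \<gamma> = sets (borel \<Otimes>\<^sub>M borel)" using sg0 sets_pair_borel by metis
  have mg: "\<And>N. measurable \<gamma> N = measurable (borel \<Otimes>\<^sub>M borel) N"
    by (rule measurable_cong_sets[OF sg refl])
  have trf: "\<And>f. f \<in> borel_measurable borel \<Longrightarrow> (\<integral>\<^sup>+z. f z \<partial>\<alpha>) = (\<integral>\<^sup>+q. f (fst q) \<partial>\<gamma>)"
    by (subst df[symmetric], rule nn_integral_distr) (auto simp: mg)
  have trs: "\<And>f. f \<in> borel_measurable borel \<Longrightarrow> (\<integral>\<^sup>+z. f z \<partial>\<nu>) = (\<integral>\<^sup>+q. f (snd q) \<partial>\<gamma>)"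
    by (subst ds[symmetric], rule nn_integral_distr) (auto simp: mg)
  define F where "F y = (\<integral>\<^sup>+z. ennreal (norm (y - z)) \<partial>\<nu>)" for y
  define H where "H y = (\<integral>\<^sup>+z. ennreal (norm (y - z)) \<partial>\<alpha>)" for y
  define c where "c = (\<integral>\<^sup>+ p. ennreal (norm (fst p - snd p)) \<partial>\<gamma>)"
  have mF[measurable]: "F \<in> borel_measurable borel" unfolding F_def by (rule meas_G[OF sn pn])
  have mH[measurable]: "H \<in> borel_measurable borel" unfolding H_def by (rule meas_G[OF sa pa])
  have Fle: "F y \<le> H y + c" for y
  proof -
    have "F y = (\<integral>\<^sup>+q. ennreal (norm (y - snd q)) \<partial>\<gamma>)" unfolding F_def by (rule trs) simp
    also have "\<dots> \<le> (\<integral>\<^sup>+q. ennreal (norm (y - fst q)) + ennreal (norm (fst q - snd q)) \<partial>\<gamma>)"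
      by (intro nn_integral_mono) (simp add: ennreal_plus[symmetric] add: tri3 del: ennreal_plus)
    also have "\<dots> = (\<integral>\<^sup>+q. ennreal (norm (y - fst q)) \<partial>\<gamma>) + c"
      unfolding c_def by (rule nn_integral_add) (auto simp: mg)
    also have "(\<integral>\<^sup>+q. ennreal (norm (y - fst q)) \<partial>\<gamma>) = H y" unfolding H_def by (rule trf[symmetric]) simp
    finally show ?thesis .
  qed
  have Hle: "H (snd q) \<le> ennreal (norm (fst q - snd q)) + H (fst q)" for q
  proof -
    interpret A: prob_space \<alpha> by fact
    have "H (snd q) \<le> (\<integral>\<^sup>+z. ennreal (norm (fst q - snd q)) + ennreal (norm (fst q - z)) \<partial>\<alpha>)"
      unfolding H_def by (intro nn_integral_mono)
        (simp add: ennreal_plus[symmetric] norm_minus_commute[of "fst q" "snd q"] add: tri3 del: ennreal_plus)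
    also have "\<dots> = ennreal (norm (fst q - snd q)) + H (fst q)"
      unfolding H_def by (subst nn_integral_add) (auto simp: measurable_cong_sets[OF sa refl] A.emeasure_space_1)
    finally show ?thesis .
  qed
  have e1: "(\<integral>\<^sup>+y. \<integral>\<^sup>+z. ennreal (norm (y - z)) \<partial>\<nu> \<partial>\<nu>) = (\<integral>\<^sup>+q. F (snd q) \<partial>\<gamma>)"
    unfolding F_def[symmetric] by (rule trs) simp
  have e2: "(\<integral>\<^sup>+q. F (snd q) \<partial>\<gamma>) \<le> (\<integral>\<^sup>+q. H (snd q) + c \<partial>\<gamma>)" by (intro nn_integral_mono Fle)
  have e3: "(\<integral>\<^sup>+q. H (snd q) + c \<partial>\<gamma>) = (\<integral>\<^sup>+q. H (snd q) \<partial>\<gamma>) + c"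
    by (subst nn_integral_add) (auto simp: mg G.emeasure_space_1)
  have e4: "(\<integral>\<^sup>+q. H (snd q) \<partial>\<gamma>) \<le> (\<integral>\<^sup>+q. ennreal (norm (fst q - snd q)) + H (fst q) \<partial>\<gamma>)"
    by (intro nn_integral_mono Hle)
  have e5: "(\<integral>\<^sup>+q. ennreal (norm (fst q - snd q)) + H (fst q) \<partial>\<gamma>) = c + (\<integral>\<^sup>+q. H (fst q) \<partial>\<gamma>)"
    unfolding c_def by (rule nn_integral_add) (auto simp: mg)
  have e6: "(\<integral>\<^sup>+q. H (fst q) \<partial>\<gamma>) = (\<integral>\<^sup>+y. \<integral>\<^sup>+z. ennreal (norm (y - z)) \<partial>\<alpha> \<partial>\<alpha>)"
    unfolding H_def[symmetric] by (rule trf[symmetric]) simp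
  have "(\<integral>\<^sup>+y. \<integral>\<^sup>+z. ennreal (norm (y - z)) \<partial>\<nu> \<partial>\<nu>) \<le> (\<integral>\<^sup>+q. H (snd q) \<partial>\<gamma>) + c"
    using e1 e2 e3 by simp
  also have "\<dots> \<le> (c + (\<integral>\<^sup>+q. H (fst q) \<partial>\<gamma>)) + c"
    using e4 e5 by (intro add_right_mono) simp
  also have "\<dots> = 2 * c + (\<integral>\<^sup>+y. \<integral>\<^sup>+z. ennreal (norm (y - z)) \<partial>\<alpha> \<partial>\<alpha>)"
    unfolding e6 mult_2 by (simp add: ac_simps)
  finally show ?thesis unfolding c_def .
qed


lemma half_lemma:
  fixes a b c :: ennreal
  assumes "a \<noteq> top" "a \<le> 2 * c + b"
  shows "(a - b) * ennreal (1/2) \<le> c"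
proof -
  have "a - b \<le> 2 * c" using assms by (simp add: ennreal_minus_le_iff add.commute)
  then have "(a - b) * ennreal (1/2) \<le> 2 * c * ennreal (1/2)" by (rule mult_right_mono) simp
  also have "2 * c * ennreal (1/2) = c * (ennreal 2 * ennreal (1/2))"
    by (simp add: ac_simps)
  also have "ennreal 2 * ennreal (1/2) = ennreal (2 * (1/2))" by (rule ennreal_mult[symmetric]) auto
  also have "ennreal (2 * (1/2)) = 1" by simp
  finally show ?thesis by simp
qed

lemma W_ineq:
  fixes \<alpha> \<nu> :: "'a::{banach,second_countable_topology} measure"
  assumes sa: "sets \<alpha> = sets borel" and pa: "prob_space \<alpha>"
    and sn: "sets \<nu> = sets borel" and pn: "prob_space \<nu>"
    and fin: "(\<integral>\<^sup>+y. \<integral>\<^sup>+z. ennreal (norm (y - z)) \<partial>\<nu> \<partial>\<nu>) \<noteq> top"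
  shows "((\<integral>\<^sup>+y. \<integral>\<^sup>+z. ennreal (norm (y - z)) \<partial>\<nu> \<partial>\<nu>) - (\<integral>\<^sup>+y. \<integral>\<^sup>+z. ennreal (norm (y - z)) \<partial>\<alpha> \<partial>\<alpha>))
      * ennreal (1/2) \<le> wasserstein (\<lambda>x y. norm (x - y)) \<alpha> \<nu>"
  unfolding wasserstein_def
  by (intro INF_greatest half_lemma[OF fin] coupling_ineq[OF sa pa sn pn]) simp

lemma moment_bound:
  fixes M :: "'a::{banach,second_countable_topology} measure"
  assumes sm: "sets M = sets borel" and pm: "prob_space M"
  shows "(\<integral>\<^sup>+y. \<integral>\<^sup>+z. ennreal (norm (y - z)) \<partial>M \<partial>M) \<le> 2 * (\<integral>\<^sup>+y. ennreal (norm y) \<partial>M)"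
proof -
  interpret prob_space M by fact
  have mc: "\<And>N. measurable M N = measurable borel N" by (rule measurable_cong_sets[OF sm refl])
  have "(\<integral>\<^sup>+y. \<integral>\<^sup>+z. ennreal (norm (y - z)) \<partial>M \<partial>M) \<le> (\<integral>\<^sup>+y. \<integral>\<^sup>+z. ennreal (norm y) + ennreal (norm z) \<partial>M \<partial>M)"
    by (intro nn_integral_mono) (simp add: norm_triangle_ineq4 flip: ennreal_plus)
  also have "\<dots> = (\<integral>\<^sup>+y. ennreal (norm y) + (\<integral>\<^sup>+z. ennreal (norm z) \<partial>M) \<partial>M)"
    by (intro nn_integral_cong, subst nn_integral_add) (auto simp: mc emeasure_space_1)
  also have "\<dots> = 2 * (\<integral>\<^sup>+y. ennreal (norm y) \<partial>M)"
    by (subst nn_integral_add) (auto simp: mc emeasure_space_1 mult_2)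
  finally show ?thesis .
qed

lemma prod_coupling:
  fixes \<alpha> \<nu> :: "'a::{banach,second_countable_topology} measure"
  assumes sa: "sets \<alpha> = sets borel" and pa: "prob_space \<alpha>"
    and sn: "sets \<nu> = sets borel" and pn: "prob_space \<nu>"
  shows "\<alpha> \<Otimes>\<^sub>M \<nu> \<in> couplings \<alpha> \<nu>"
    and "(\<integral>\<^sup>+ p. ennreal (norm (fst p - snd p)) \<partial>(\<alpha> \<Otimes>\<^sub>M \<nu>)) \<le>
           (\<integral>\<^sup>+y. ennreal (norm y) \<partial>\<alpha>) + (\<integral>\<^sup>+y. ennreal (norm y) \<partial>\<nu>)"
proof -
  interpret A: prob_space \<alpha> by fact
  interpret N: prob_space \<nu> by fact
  interpret P: pair_prob_space \<alpha> \<nu> by unfold_locales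
  have sp: "sets (\<alpha> \<Otimes>\<^sub>M \<nu>) = sets (borel \<Otimes>\<^sub>M borel)" by (rule sets_pair_measure_cong[OF sa sn])
  have mp: "\<And>N. measurable (\<alpha> \<Otimes>\<^sub>M \<nu>) N = measurable (borel \<Otimes>\<^sub>M borel) N"
    by (rule measurable_cong_sets[OF sp refl])
  have d1: "distr (\<alpha> \<Otimes>\<^sub>M \<nu>) borel fst = \<alpha>"
  proof -
    have "distr (\<alpha> \<Otimes>\<^sub>M \<nu>) borel fst = distr (\<alpha> \<Otimes>\<^sub>M \<nu>) \<alpha> fst" by (rule distr_cong) (auto simp: sa)
    also have "\<dots> = \<alpha>" by (rule N.distr_pair_fst)
    finally show ?thesis .
  qed
  have d2: "distr (\<alpha> \<Otimes>\<^sub>M \<nu>) borel snd = \<nu>"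
  proof (rule measure_eqI)
    show "sets (distr (\<alpha> \<Otimes>\<^sub>M \<nu>) borel snd) = sets \<nu>" using sn by simp
    fix B assume B: "B \<in> sets (distr (\<alpha> \<Otimes>\<^sub>M \<nu>) borel snd)"
    then have B': "B \<in> sets \<nu>" using sn by simp
    have "emeasure (distr (\<alpha> \<Otimes>\<^sub>M \<nu>) borel snd) B = emeasure (\<alpha> \<Otimes>\<^sub>M \<nu>) (snd -` B \<inter> space (\<alpha> \<Otimes>\<^sub>M \<nu>))"
      using B by (intro emeasure_distr) (auto simp: mp)
    also have "snd -` B \<inter> space (\<alpha> \<Otimes>\<^sub>M \<nu>) = space \<alpha> \<times> B"
      using sets.sets_into_space[OF B'] by (auto simp: space_pair_measure)
    also have "emeasure (\<alpha> \<Otimes>\<^sub>M \<nu>) (space \<alpha> \<times> B) = emeasure \<nu> B"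
      using B' by (subst N.emeasure_pair_measure_Times) (auto simp: A.emeasure_space_1)
    finally show "emeasure (distr (\<alpha> \<Otimes>\<^sub>M \<nu>) borel snd) B = emeasure \<nu> B" .
  qed
  show "\<alpha> \<Otimes>\<^sub>M \<nu> \<in> couplings \<alpha> \<nu>"
    unfolding couplings_def borel_prob_def using d1 d2 sp sets_pair_borel
    by (auto intro: prob_space_pair[OF pa pn])
  have "(\<integral>\<^sup>+ p. ennreal (norm (fst p - snd p)) \<partial>(\<alpha> \<Otimes>\<^sub>M \<nu>)) \<le>
          (\<integral>\<^sup>+ p. ennreal (norm (fst p)) + ennreal (norm (snd p)) \<partial>(\<alpha> \<Otimes>\<^sub>M \<nu>))"
    by (intro nn_integral_mono) (simp add: norm_triangle_ineq4 flip: ennreal_plus)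
  also have "\<dots> = (\<integral>\<^sup>+ p. ennreal (norm (fst p)) \<partial>(\<alpha> \<Otimes>\<^sub>M \<nu>)) + (\<integral>\<^sup>+ p. ennreal (norm (snd p)) \<partial>(\<alpha> \<Otimes>\<^sub>M \<nu>))"
    by (rule nn_integral_add) (auto simp: mp)
  also have "(\<integral>\<^sup>+ p. ennreal (norm (fst p)) \<partial>(\<alpha> \<Otimes>\<^sub>M \<nu>)) = (\<integral>\<^sup>+y. ennreal (norm y) \<partial>\<alpha>)"
    by (subst d1[symmetric], subst nn_integral_distr) (auto simp: mp)
  also have "(\<integral>\<^sup>+ p. ennreal (norm (snd p)) \<partial>(\<alpha> \<Otimes>\<^sub>M \<nu>)) = (\<integral>\<^sup>+y. ennreal (norm y) \<partial>\<nu>)"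
    by (subst (2) d2[symmetric], subst nn_integral_distr) (auto simp: mp)
  finally show "(\<integral>\<^sup>+ p. ennreal (norm (fst p - snd p)) \<partial>(\<alpha> \<Otimes>\<^sub>M \<nu>)) \<le>
           (\<integral>\<^sup>+y. ennreal (norm y) \<partial>\<alpha>) + (\<integral>\<^sup>+y. ennreal (norm y) \<partial>\<nu>)" .
qed

lemma W_bound:
  fixes \<alpha> \<nu> :: "'a::{banach,second_countable_topology} measure"
  assumes sa: "sets \<alpha> = sets borel" and pa: "prob_space \<alpha>"
    and sn: "sets \<nu> = sets borel" and pn: "prob_space \<nu>"
  shows "wasserstein (\<lambda>x y. norm (x - y)) \<alpha> \<nu> \<le> (\<integral>\<^sup>+y. ennreal (norm y) \<partial>\<alpha>) + (\<integral>\<^sup>+y. ennreal (norm y) \<partial>\<nu>)"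
  unfolding wasserstein_def
  by (rule INF_lower2[OF prod_coupling(1)[OF assms]]) (simp add: prod_coupling(2)[OF assms])


lemma half_back: "(a::ennreal) * ennreal (1/2) \<le> b \<Longrightarrow> a \<le> 2 * b"
proof -
  assume h: "a * ennreal (1/2) \<le> b"
  have e: "ennreal (1/2) * ennreal 2 = ennreal ((1/2) * 2)" by (rule ennreal_mult[symmetric]) auto
  have "a = a * (ennreal (1/2) * ennreal 2)"
    unfolding e by simp
  also have "\<dots> = (a * ennreal (1/2)) * 2" by (simp add: ac_simps)
  also have "\<dots> \<le> b * 2" using h by (rule mult_right_mono) simp
  finally show ?thesis by (simp add: ac_simps)
qed

lemma real_final:
  fixes d w ia :: real
  assumes "d > 0" "d \<le> 2 * w + ia"
  shows "1 - ia / d \<le> 2 * (w / d)"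
proof -
  have "1 - ia / d = (d - ia) / d" using assms(1) by (simp add: field_simps)
  also have "\<dots> \<le> (2 * w) / d" using assms by (intro divide_right_mono) auto
  finally show ?thesis by simp
qed

theorem mainTheorem6:
  fixes \<mu> \<nu> :: "'a::{banach, second_countable_topology} measure"
    and \<pi> :: "('a \<times> 'a) measure"
    and K :: "'a \<Rightarrow> 'a measure"
  assumes "borel_prob \<mu>" and "borel_prob \<nu>"
    and "(\<integral>\<^sup>+ x. ennreal (norm x) \<partial>\<nu>) < \<infinity>"
    and "\<not> (\<exists>a. \<nu> = return borel a)"
    and "\<pi> \<in> couplings \<mu> \<nu>"
    and "disintegration \<pi> \<mu> K"
  shows "T_norm \<mu> \<nu> K \<le> 2 * wcorr (\<lambda>x y. norm (x - y)) \<mu> \<nu> K"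
proof -
  from assms(1) have pm: "prob_space \<mu>" and sm: "sets \<mu> = sets borel" by (auto simp: borel_prob_def)
  from assms(2) have pn: "prob_space \<nu>" and sn: "sets \<nu> = sets borel" by (auto simp: borel_prob_def)
  interpret Mu: prob_space \<mu> by fact
  interpret Nu: prob_space \<nu> by fact
  from assms(5) have sp: "sets \<pi> = sets borel" and dsnd: "distr \<pi> borel snd = \<nu>"
    by (auto simp: couplings_def borel_prob_def)
  from assms(6) have Km0: "K \<in> borel \<rightarrow>\<^sub>M prob_algebra borel"
    and rect: "\<And>A B. A \<in> sets borel \<Longrightarrow> B \<in> sets borel \<Longrightarrow>
        emeasure \<pi> (A \<times> B) = (\<integral>\<^sup>+ x. indicator A x * emeasure (K x) B \<partial>\<mu>)"
    by (auto simp: disintegration_def)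
  have Kx: "sets (K x) = sets borel \<and> prob_space (K x)" for x
    using measurable_space[OF Km0, of x] by (simp add: space_prob_algebra)
  have Km[measurable]: "K \<in> \<mu> \<rightarrow>\<^sub>M subprob_algebra borel"
    using measurable_prob_algebraD[OF Km0] by (simp add: measurable_cong_sets[OF sm refl])
  have mmu: "\<And>N. measurable \<mu> N = measurable borel N" by (rule measurable_cong_sets[OF sm refl])
  have mnu: "\<And>N. measurable \<nu> N = measurable borel N" by (rule measurable_cong_sets[OF sn refl])
  have nu_bind: "\<nu> = \<mu> \<bind> K"
  proof (rule measure_eqI)
    show "sets \<nu> = sets (\<mu> \<bind> K)" using sn Kx Mu.not_empty by (subst sets_bind) auto
    fix B assume B: "B \<in> sets \<nu>"
    then have Bb: "B \<in> sets borel" using sn by simp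
    have spu: "space \<pi> = UNIV" using sets_eq_imp_space_eq[OF sp] by simp
    have ms: "snd \<in> \<pi> \<rightarrow>\<^sub>M borel"
      using measurable_cong_sets[OF sp refl] sets_pair_borel measurable_snd
      by (metis measurable_cong_sets)
    have "emeasure \<nu> B = emeasure \<pi> (snd -` B \<inter> space \<pi>)"
      by (subst dsnd[symmetric], rule emeasure_distr[OF ms Bb])
    also have "snd -` B \<inter> space \<pi> = UNIV \<times> B" using spu by auto
    also have "emeasure \<pi> (UNIV \<times> B) = (\<integral>\<^sup>+ x. emeasure (K x) B \<partial>\<mu>)"
      using rect[OF _ Bb, of UNIV] by simp
    also have "\<dots> = emeasure (\<mu> \<bind> K) B"
      by (rule emeasure_bind[symmetric, OF Mu.not_empty Km Bb])
    finally show "emeasure \<nu> B = emeasure (\<mu> \<bind> K) B" .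
  qed
  define M1 where "M1 = (\<integral>\<^sup>+ x. ennreal (norm x) \<partial>\<nu>)"
  have M1fin: "M1 < top" using assms(3) unfolding M1_def by simp
  have M1bind: "M1 = (\<integral>\<^sup>+ x. \<integral>\<^sup>+ y. ennreal (norm y) \<partial>K x \<partial>\<mu>)"
    unfolding M1_def by (subst nu_bind, rule nn_integral_bind[OF _ Km]) simp
  define D where "D = (\<integral>\<^sup>+y. \<integral>\<^sup>+z. ennreal (norm (y - z)) \<partial>\<nu> \<partial>\<nu>)"
  define A where "A x = (\<integral>\<^sup>+y. \<integral>\<^sup>+z. ennreal (norm (y - z)) \<partial>K x \<partial>K x)" for x
  define W where "W x = wasserstein (\<lambda>x y. norm (x - y)) (K x) \<nu>" for x
  have Dle: "D \<le> 2 * M1" unfolding D_def M1_def by (rule moment_bound[OF sn pn])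
  have Dfin: "D \<noteq> top" using Dle M1fin
    by (metis ennreal_mult_less_top ennreal_numeral_less_top top.not_eq_extremum order.strict_trans1 less_irrefl)
  have Dpos: "D \<noteq> 0"
  proof
    assume D0: "D = 0"
    define F where "F y = (\<integral>\<^sup>+z. ennreal (norm (y - z)) \<partial>\<nu>)" for y
    have mF: "F \<in> borel_measurable \<nu>" unfolding F_def mnu by (rule meas_G[OF sn pn])
    have "integral\<^sup>N \<nu> F = 0" using D0 unfolding D_def F_def .
    then have ae: "AE y in \<nu>. F y = 0" using nn_integral_0_iff_AE[OF mF] by simp
    have "\<exists>y. F y = 0"
    proof (rule ccontr)
      assume "\<not> (\<exists>y. F y = 0)"
      then have "AE y in \<nu>. False" using ae by (auto elim: AE_mp)
      then show False by simp
    qed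
    then obtain y0 where y0: "F y0 = 0" by blast
    have "AE z in \<nu>. ennreal (norm (y0 - z)) = 0"
      using y0 unfolding F_def by (subst (asm) nn_integral_0_iff_AE) (auto simp: mnu)
    then have aez: "AE z in \<nu>. z = y0" by eventually_elim simp
    have "\<nu> = return borel y0"
    proof (rule measure_eqI)
      show "sets \<nu> = sets (return borel y0)" using sn by simp
      fix B assume B: "B \<in> sets \<nu>"
      have "emeasure \<nu> B = (\<integral>\<^sup>+z. indicator B z \<partial>\<nu>)" using B by simp
      also have "\<dots> = (\<integral>\<^sup>+z. indicator B y0 \<partial>\<nu>)"
        using aez by (intro nn_integral_cong_AE) (auto elim: AE_mp)
      also have "\<dots> = indicator B y0" by (simp add: Nu.emeasure_space_1)
      also have "\<dots> = emeasure (return borel y0) B" using B sn by simp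
      finally show "emeasure \<nu> B = emeasure (return borel y0) B" .
    qed
    then show False using assms(4) by blast
  qed
  have mA[measurable]: "A \<in> borel_measurable \<mu>"
  proof -
    have m1: "(\<lambda>p. \<integral>\<^sup>+z. ennreal (norm (snd p - z)) \<partial>K (fst p)) \<in> borel_measurable (\<mu> \<Otimes>\<^sub>M borel)"
      by (rule nn_integral_measurable_subprob_algebra2[where f="\<lambda>p z. ennreal (norm (snd p - z))"]) measurable
    have "(\<lambda>x. \<integral>\<^sup>+y. (\<integral>\<^sup>+z. ennreal (norm (y - z)) \<partial>K x) \<partial>K x) \<in> borel_measurable \<mu>"
      by (rule nn_integral_measurable_subprob_algebra2[where f="\<lambda>x y. \<integral>\<^sup>+z. ennreal (norm (y - z)) \<partial>K x"])
        (use m1 in \<open>simp add: case_prod_beta'\<close>, rule Km)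
    then show ?thesis unfolding A_def .
  qed
  define g where "g x = (\<integral>\<^sup>+ y. ennreal (norm y) \<partial>K x)" for x
  have mg[measurable]: "g \<in> borel_measurable \<mu>"
    unfolding g_def
    by (rule nn_integral_measurable_subprob_algebra2[where f="\<lambda>x y. ennreal (norm y)"]) measurable
  have Ig: "(\<integral>\<^sup>+x. g x \<partial>\<mu>) = M1" unfolding g_def M1bind ..
  have IA: "(\<integral>\<^sup>+x. A x \<partial>\<mu>) \<le> 2 * M1"
  proof -
    have "(\<integral>\<^sup>+x. A x \<partial>\<mu>) \<le> (\<integral>\<^sup>+x. 2 * g x \<partial>\<mu>)"
      unfolding A_def g_def using Kx by (intro nn_integral_mono moment_bound) auto
    also have "\<dots> = 2 * M1" by (subst nn_integral_cmult) (auto simp: Ig)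
    finally show ?thesis .
  qed
  have IW: "(\<integral>\<^sup>+x. W x \<partial>\<mu>) \<le> 2 * M1"
  proof -
    have "(\<integral>\<^sup>+x. W x \<partial>\<mu>) \<le> (\<integral>\<^sup>+x. g x + M1 \<partial>\<mu>)"
      unfolding W_def g_def M1_def using Kx by (intro nn_integral_mono W_bound sn pn) auto
    also have "\<dots> = M1 + M1" by (subst nn_integral_add) (auto simp: Ig Mu.emeasure_space_1)
    finally show ?thesis by (simp add: mult_2)
  qed
  have key: "(\<integral>\<^sup>+x. (D - A x) * ennreal (1/2) \<partial>\<mu>) \<le> (\<integral>\<^sup>+x. W x \<partial>\<mu>)"
    unfolding D_def A_def W_def using Kx Dfin
    by (intro nn_integral_mono W_ineq sn pn) (auto simp: D_def)
  have "(\<integral>\<^sup>+x. (D - A x) * ennreal (1/2) \<partial>\<mu>) = (\<integral>\<^sup>+x. (D - A x) \<partial>\<mu>) * ennreal (1/2)"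
    by (rule nn_integral_multc) measurable
  with key have k2: "(\<integral>\<^sup>+x. (D - A x) \<partial>\<mu>) \<le> 2 * (\<integral>\<^sup>+x. W x \<partial>\<mu>)"
    by (intro half_back) simp
  have "D = (\<integral>\<^sup>+x. D \<partial>\<mu>)" by (simp add: Mu.emeasure_space_1)
  also have "\<dots> \<le> (\<integral>\<^sup>+x. (D - A x) + A x \<partial>\<mu>)"
    by (intro nn_integral_mono) (simp add: diff_add_self_ennreal linorder_not_le less_imp_le)
  also have "\<dots> = (\<integral>\<^sup>+x. (D - A x) \<partial>\<mu>) + (\<integral>\<^sup>+x. A x \<partial>\<mu>)"
    by (rule nn_integral_add) measurable
  also have "\<dots> \<le> 2 * (\<integral>\<^sup>+x. W x \<partial>\<mu>) + (\<integral>\<^sup>+x. A x \<partial>\<mu>)"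
    using k2 by (rule add_right_mono)
  finally have Dineq: "D \<le> 2 * (\<integral>\<^sup>+x. W x \<partial>\<mu>) + (\<integral>\<^sup>+x. A x \<partial>\<mu>)" .
  define d where "d = enn2real D"
  define w where "w = enn2real (\<integral>\<^sup>+x. W x \<partial>\<mu>)"
  define ia where "ia = enn2real (\<integral>\<^sup>+x. A x \<partial>\<mu>)"
  have fin2: "2 * M1 < top" using M1fin by (simp add: ennreal_mult_less_top)
  have eD: "D = ennreal d" unfolding d_def using Dfin by (simp add: ennreal_enn2real less_top)
  have eW: "(\<integral>\<^sup>+x. W x \<partial>\<mu>) = ennreal w" unfolding w_def using IW fin2 by (metis ennreal_enn2real order.strict_trans1)
  have eA: "(\<integral>\<^sup>+x. A x \<partial>\<mu>) = ennreal ia" unfolding ia_def using IA fin2 by (metis ennreal_enn2real order.strict_trans1)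
  have w0: "w \<ge> 0" "ia \<ge> 0" unfolding w_def ia_def by auto
  have el: "ennreal d \<le> ennreal (2 * w + ia)"
    using Dineq unfolding eD eW eA using w0 by (simp add: ennreal_plus ennreal_mult)
  have z: "0 \<le> 2 * w + ia" using w0 by simp
  have dle: "d \<le> 2 * w + ia" by (rule iffD1[OF ennreal_le_iff[OF z] el])
  have dpos: "d > 0" unfolding d_def using Dpos Dfin by (simp add: enn2real_positive_iff less_top[symmetric] zero_less_iff_neq_zero)
  have T: "T_norm \<mu> \<nu> K = 1 - ia / d" unfolding T_norm_def ia_def d_def A_def D_def ..
  have Wc: "wcorr (\<lambda>x y. norm (x - y)) \<mu> \<nu> K = w / d" unfolding wcorr_def w_def d_def W_def D_def ..
  show ?thesis unfolding T Wc by (rule real_final[OF dpos dle])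
qed
end
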